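(* Let $k\ge2$, $-\frac{\pi}{2}\le\theta_1<\dots<\theta_k\le\frac{\pi}{2}$, $\hat\theta_1,\dots,\hat\theta_k\in[-\frac{\pi}{2},\frac{\pi}{2}]$, and $\epsilon>0$. If $$\|\eta_{k,k}(e^{i\theta_1},\dots,e^{i\theta_k},e^{i\hat\theta_1},\dots,e^{i\hat\theta_k})\|_\infty<\Big(\frac{2}{\pi}\Big)^k\epsilon\quad\text{and}\quad\theta_{\min}=\min_{q\ne j}|\theta_q-\theta_j|\ge\Big(\frac{4\epsilon}{\lambda(k)}\Big)^{1/k},$$ then after reordering the $\hat\theta_j$, for all $j=1,\dots,k$, $$|\hat\theta_j-\theta_j|<\frac{\theta_{\min}}{2}\quad\text{and}\quad|\hat\theta_j-\theta_j|\le\frac{2^{k-1}\epsilon}{(k-2)!\,\theta_{\min}^{k-1}}.$$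
   Context: For $z_1,\dots,z_p,\hat z_1,\dots,\hat z_q\in\mathbb C$, $\eta_{p,q}(z_1,\dots,z_p,\hat z_1,\dots,\hat z_q)\in\mathbb R^p$ is the vector whose $j$-th entry is $\prod_{l=1}^q|z_j-\hat z_l|$. For an integer $k\ge1$: $\xi(1)=\frac12$; $\xi(k)=\frac{(\frac{k-1}{2})!(\frac{k-3}{2})!}{4}$ if $k\ge3$ is odd; $\xi(k)=\frac{((\frac{k-2}{2})!)^2}{4}$ if $k$ is even. For $k\ge2$: $\lambda(2)=1$ and $\lambda(k)=\xi(k-2)$ for $k\ge3$. *)

theory Defs
  imports Complex_Main "HOL-Combinatorics.Permutations"
begin

text \<open>Vectors in R^p / C^p are represented as functions on the index set {1..p}.\<close>

definition eta :: "nat \<Rightarrow> nat \<Rightarrow> (nat \<Rightarrow> complex) \<Rightarrow> (nat \<Rightarrow> complex) \<Rightarrow> nat \<Rightarrow> real" where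
  "eta p q z zh j = (\<Prod>l\<in>{1..q}. cmod (z j - zh l))"

definition linf_norm :: "nat \<Rightarrow> (nat \<Rightarrow> real) \<Rightarrow> real" where
  "linf_norm p v = Max ((\<lambda>j. \<bar>v j\<bar>) ` {1..p})"

definition xi :: "nat \<Rightarrow> real" where
  "xi k = (if k = 1 then 1/2
           else if odd k then fact ((k - 1) div 2) * fact ((k - 3) div 2) / 4
           else (fact ((k - 2) div 2))^2 / 4)"

definition lam :: "nat \<Rightarrow> real" where
  "lam k = (if k = 2 then 1 else xi (k - 2))"

end

theory Submission imports Defs "HOL-Analysis.Analysis" "HOL-Computational_Algebra.Polynomial" begin

definition Mf :: "nat \<Rightarrow> nat" where "Mf n = fact (n div 2) * fact ((n+1) div 2)"

lemma Mf_le_aux: "q \<le> p \<Longrightarrow> Mf (p+q) \<le> fact p * fact q"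
proof (induction "p - q" arbitrary: p q rule: less_induct)
  case less
  show ?case
  proof (cases "p \<le> q + 1")
    case True
    then have "p = q \<or> p = q+1" using less.prems by auto
    then show ?thesis
    proof
      assume "p = q" then show ?thesis by (simp add: Mf_def)
    next
      assume p: "p = q+1"
      have "(q + 1 + q) div 2 = q" "(q + 1 + q + 1) div 2 = q + 1" by presburger+
      then show ?thesis using p by (simp add: Mf_def)
    qed
  next
    case False
    then have "Mf ((p-1)+(q+1)) \<le> fact (p-1) * fact (q+1)" by (intro less.hyps) auto
    moreover have "fact (p-1) * fact (q+1) \<le> (fact p * fact q :: nat)"
    proof -
      have p: "fact p = p * (fact (p-1) :: nat)" using False by (cases p) auto
      have q: "fact (q+1) = (q+1) * (fact q :: nat)" by simp
      have "fact (p-1) * fact (q+1) = (q+1) * (fact (p-1) * (fact q :: nat))" by (simp add: algebra_simps)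
      also have "\<dots> \<le> p * (fact (p-1) * fact q)" using False by (intro mult_right_mono) auto
      finally show ?thesis by (simp add: p)
    qed
    moreover have "(p-1)+(q+1) = p+q" using False by simp
    ultimately show ?thesis by simp
  qed
qed

lemma Mf_le: "Mf (p+q) \<le> fact p * fact q"
  by (cases "q \<le> p") (use Mf_le_aux[of q p] Mf_le_aux[of p q] in \<open>auto simp: add.commute mult.commute\<close>)

lemma Mf3: "(2*n+7) * Mf n \<le> 8 * Mf (n+3)"
proof (cases "even n")
  case True
  then obtain m where n: "n = 2*m" by blast
  have a: "Mf n = fact m * fact m" unfolding n Mf_def by simp
  have d1: "(2*m+3) div 2 = m+1" "(2*m+3+1) div 2 = m+2" by presburger+
  have b: "Mf (n+3) = (m+1)*(m+1)*(m+2) * (fact m * fact m)"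
    unfolding n Mf_def d1 by (simp add: algebra_simps)
  have c: "2*n+7 \<le> 8*((m+1)*(m+1)*(m+2))" unfolding n by (simp add: algebra_simps)
  have "(2*n+7)*(fact m*fact m) \<le> (8*((m+1)*(m+1)*(m+2)))*(fact m*fact m)" by (rule mult_right_mono[OF c]) simp
  then show ?thesis unfolding a b by (simp only: mult.assoc)
next
  case False
  then obtain m where n: "n = 2*m+1" using oddE by blast
  have d0: "(2*m+1) div 2 = m" "(2*m+1+1) div 2 = m+1" by presburger+
  have a: "Mf n = fact m * fact (m+1)" unfolding n Mf_def d0 by simp
  have d1: "(2*m+1+3) div 2 = m+2" "(2*m+1+3+1) div 2 = m+2" by presburger+
  have b: "Mf (n+3) = (m+2)*(m+2)*(m+1) * (fact m * fact (m+1))"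
    unfolding n Mf_def d1 by (simp add: algebra_simps)
  have c: "2*n+7 \<le> 8*((m+2)*(m+2)*(m+1))" unfolding n by (simp add: algebra_simps)
  have "(2*n+7)*(fact m*fact (m+1)) \<le> (8*((m+2)*(m+2)*(m+1)))*(fact m*fact (m+1))" by (rule mult_right_mono[OF c]) simp
  then show ?thesis unfolding a b by (simp only: mult.assoc)
qed

lemma lam_Mf: "k \<ge> 4 \<Longrightarrow> lam k = real (Mf (k-4)) / 4"
proof -
  assume k: "k \<ge> 4"
  consider m where "k = 2*m+4" | m where "k = 2*m+5"
  proof (cases "even (k-4)")
    case True then obtain m where "k - 4 = 2*m" by blast
    then have "k = 2*m+4" using k by simp
    then show ?thesis using that(1) by blast
  next
    case False then obtain m where "k - 4 = 2*m+1" using oddE by blast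
    then have "k = 2*m+5" using k by simp
    then show ?thesis using that(2) by blast
  qed
  then show ?thesis
  proof cases
    case 1
    have "k - 2 = 2*m+2" "k \<noteq> 2" using 1 by auto
    then have l: "lam k = xi (2*m+2)" unfolding lam_def by simp
    have x: "xi (2*m+2) = (fact m)^2/4" unfolding xi_def by simp
    have e: "(2*m+1) div 2 = m" by presburger
    have "Mf (k-4) = fact m * fact m" unfolding 1 Mf_def by (simp add: e)
    then show ?thesis using l x by (simp add: power2_eq_square)
  next
    case 2
    have "k - 2 = 2*m+3" "k \<noteq> 2" using 2 by auto
    then have l: "lam k = xi (2*m+3)" unfolding lam_def by simp
    have e: "(2*m+3-1) div 2 = m+1" "(2*m+3-3) div 2 = m" "(2*m+1) div 2 = m" "(2*m+1+1) div 2 = m+1" "odd (2*m+3)" by presburger+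
    have x: "xi (2*m+3) = fact (m+1) * fact m/4" unfolding xi_def using e by simp
    have "Mf (k-4) = fact m * fact (m+1)" unfolding 2 Mf_def using e by simp
    then show ?thesis using l x by (simp add: algebra_simps)
  qed
qed

lemma lam_key:
  assumes "k \<ge> 4" "1 \<le> j" "j \<le> k"
  shows "(2*real k - 1) * lam k \<le> 2 * real (Mf (k-1))"
proof -
  have "(2*(k-4)+7) * Mf (k-4) \<le> 8 * Mf (k-4+3)" by (rule Mf3)
  moreover have "k-4+3 = k-1" "2*(k-4)+7 = 2*k-1" using assms by auto
  ultimately have h: "(2*k-1) * Mf (k-4) \<le> 8 * Mf (k-1)" by simp
  have "real ((2*k-1) * Mf (k-4)) \<le> real (8 * Mf (k-1))" using h by (simp only: of_nat_le_iff)
  then have "real (2*k-1) * real (Mf (k-4)) \<le> 8 * real (Mf (k-1))" by (simp only: of_nat_mult of_nat_numeral)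
  moreover have "real (2*k-1) = 2*real k - 1" using assms by simp
  ultimately have A: "(2*real k - 1) * real (Mf (k-4)) \<le> 8 * real (Mf (k-1))" by simp
  have "(2*real k-1)*lam k = ((2*real k-1)*real(Mf(k-4)))/4" using lam_Mf[OF assms(1)] by simp
  then show ?thesis using A by linarith
qed

fun oddf :: "nat \<Rightarrow> nat" where "oddf 0 = 1" | "oddf (Suc n) = (2*n+1) * oddf n"

lemma oddf_ge: "\<forall>p q. p + q = n \<longrightarrow> 1 \<le> n \<longrightarrow> fact (n-1) \<le> oddf p * oddf q"
proof (induction n)
  case 0 then show ?case by simp
next
  case (Suc n)
  have main: "fact n \<le> oddf p * oddf q" if "p + q = Suc n" "q \<le> p" for p q
  proof -
    have "p \<noteq> 0" using that by auto
    then obtain p' where p: "p = Suc p'" using not0_implies_Suc by blast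
    show ?thesis
    proof (cases "n = 0")
      case True then show ?thesis using that p by auto
    next
      case False
      have ih: "fact (n-1) \<le> oddf p' * oddf q" using Suc.IH that p False by auto
      have "fact n = n * (fact (n-1) :: nat)" using False by (cases n) auto
      also have "\<dots> \<le> (2*p'+1) * (oddf p' * oddf q)"
        using that p by (intro mult_mono ih) auto
      also have "\<dots> = oddf p * oddf q" by (simp only: p oddf.simps mult.assoc)
      finally show ?thesis .
    qed
  qed
  show ?case
  proof (intro allI impI)
    fix p q assume "p + q = Suc n"
    then show "fact (Suc n - 1) \<le> oddf p * oddf q"
      using main[of p q] main[of q p] by (cases "q \<le> p") (auto simp: mult.commute add.commute)
  qed
qed

lemma oddf_prod: "real (oddf n) = (\<Prod>d\<in>{1..n}. 2 * real d - 1)"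
  by (induction n) (auto simp: prod.cl_ivl_Suc algebra_simps)

lemma fact_prod_real: "(fact n :: real) = (\<Prod>d\<in>{1..n}. real d)"
  by (induction n) (auto simp: prod.cl_ivl_Suc algebra_simps)

lemma jordan: assumes "0 \<le> x" "x \<le> pi/2" shows "2/pi * x \<le> sin x"
proof -
  have conc: "concave_on {0..pi} sin"
    by (rule f''_le0_imp_concave[where f'=cos and f''="\<lambda>x. - sin x"])
       (auto intro!: derivative_eq_intros sin_ge_zero)
  define t where "t = 2/pi * x"
  have t: "0 \<le> t" "t \<le> 1" using assms pi_gt_zero unfolding t_def by (auto simp: field_simps)
  have "(1 - t) * sin 0 + t * sin (pi/2) \<le> sin ((1 - t) *\<^sub>R 0 + t *\<^sub>R (pi/2))"
    by (rule concave_onD[OF conc]) (use t in auto)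
  moreover have "t *\<^sub>R (pi/2) = x" unfolding t_def by simp
  ultimately show ?thesis unfolding t_def by simp
qed

lemma chord:
  assumes "-(pi/2) \<le> a" "a \<le> pi/2" "-(pi/2) \<le> b" "b \<le> pi/2"
  shows "\<bar>a - b\<bar> \<le> pi/2 * cmod (exp (\<i> * of_real a) - exp (\<i> * of_real b))"
proof -
  have "exp (\<i> * of_real a) - exp (\<i> * of_real b) = exp (\<i> * of_real b) * (exp (\<i> * of_real (a - b)) - 1)"
    by (simp add: algebra_simps flip: exp_add)
  then have "cmod (exp (\<i> * of_real a) - exp (\<i> * of_real b)) = cmod (exp (\<i> * of_real b)) * cmod (exp (\<i> * of_real (a - b)) - 1)"
    by (metis norm_mult)
  then have e: "cmod (exp (\<i> * of_real a) - exp (\<i> * of_real b)) = 2 * \<bar>sin ((a-b)/2)\<bar>"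
    by (simp only: norm_exp_i_times dist_exp_i_1 mult_1)
  have s: "\<bar>sin ((a-b)/2)\<bar> = sin (\<bar>a-b\<bar>/2)"
  proof -
    have y: "0 \<le> \<bar>a-b\<bar>/2" "\<bar>a-b\<bar>/2 \<le> pi" using assms by auto
    have nn: "0 \<le> sin (\<bar>a-b\<bar>/2)" using y by (intro sin_ge_zero) auto
    show ?thesis
    proof (cases "a \<ge> b")
      case True
      then have eq: "(a-b)/2 = \<bar>a-b\<bar>/2" by simp
      show ?thesis by (simp only: eq abs_of_nonneg[OF nn])
    next
      case False
      then have ab: "\<bar>a-b\<bar> = b - a" by auto
      have "(a-b)/2 = - (\<bar>a-b\<bar>/2)" unfolding ab by (simp add: field_simps)
      then have "sin ((a-b)/2) = - sin (\<bar>a-b\<bar>/2)" by (simp only: sin_minus)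
      then show ?thesis by (simp only: abs_minus_cancel abs_of_nonneg[OF nn])
    qed
  qed
  have "2/pi * (\<bar>a-b\<bar>/2) \<le> sin (\<bar>a-b\<bar>/2)" by (rule jordan) (use assms in auto)
  then show ?thesis unfolding e s using pi_gt_zero by (simp add: field_simps)
qed

lemma prod_dist:
  fixes f :: "nat \<Rightarrow> 'a::comm_monoid_mult"
  assumes "1 \<le> c" "c \<le> k"
  shows "(\<Prod>m\<in>{1..k}-{c}. f (if m < c then c - m else m - c)) = (\<Prod>d\<in>{1..c-1}. f d) * (\<Prod>d\<in>{1..k-c}. f d)"
proof -
  have U: "{1..k}-{c} = {1..c-1} \<union> {c+1..k}" using assms by auto
  have A: "(\<Prod>m\<in>{1..c-1}. f (if m < c then c - m else m - c)) = (\<Prod>d\<in>{1..c-1}. f d)"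
    by (rule prod.reindex_bij_witness[where i="\<lambda>d. c - d" and j="\<lambda>m. c - m"]) auto
  have B: "(\<Prod>m\<in>{c+1..k}. f (if m < c then c - m else m - c)) = (\<Prod>d\<in>{1..k-c}. f d)"
    by (rule prod.reindex_bij_witness[where i="\<lambda>d. d + c" and j="\<lambda>m. m - c"]) auto
  have "(\<Prod>m\<in>{1..k}-{c}. f (if m < c then c - m else m - c)) =
     (\<Prod>m\<in>{1..c-1}. f (if m < c then c - m else m - c)) * (\<Prod>m\<in>{c+1..k}. f (if m < c then c - m else m - c))"
    unfolding U by (rule prod.union_disjoint) auto
  then show ?thesis using A B by simp
qed

lemma gap_aux:
  fixes \<theta> :: "nat \<Rightarrow> real"
  assumes inc: "\<forall>i\<in>{1..k}. \<forall>j\<in>{1..k}. i < j \<longrightarrow> \<theta> i < \<theta> j"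
    and sep: "\<forall>q\<in>{1..k}. \<forall>j\<in>{1..k}. q \<noteq> j \<longrightarrow> \<Delta> \<le> \<bar>\<theta> q - \<theta> j\<bar>"
    and a: "1 \<le> a"
  shows "\<forall>b. a \<le> b \<longrightarrow> b \<le> k \<longrightarrow> b - a = d \<longrightarrow> real d * \<Delta> \<le> \<theta> b - \<theta> a"
proof (induction d)
  case 0 then show ?case by simp
next
  case (Suc d)
  show ?case
  proof (intro allI impI)
    fix b assume b: "a \<le> b" "b \<le> k" "b - a = Suc d"
    have ih: "real d * \<Delta> \<le> \<theta> (b-1) - \<theta> a" using Suc.IH b by auto
    have bb: "b-1 \<in> {1..k}" "b \<in> {1..k}" "b - 1 < b" "b \<noteq> b - 1" using b a by auto
    have "\<theta> (b-1) < \<theta> b" using inc bb by blast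
    moreover have "\<Delta> \<le> \<bar>\<theta> b - \<theta> (b-1)\<bar>" using sep bb by blast
    ultimately have "\<Delta> \<le> \<theta> b - \<theta> (b-1)" by simp
    then show "real (Suc d) * \<Delta> \<le> \<theta> b - \<theta> a" using ih by (simp add: algebra_simps)
  qed
qed

lemma gap:
  fixes \<theta> :: "nat \<Rightarrow> real"
  assumes inc: "\<forall>i\<in>{1..k}. \<forall>j\<in>{1..k}. i < j \<longrightarrow> \<theta> i < \<theta> j"
    and sep: "\<forall>q\<in>{1..k}. \<forall>j\<in>{1..k}. q \<noteq> j \<longrightarrow> \<Delta> \<le> \<bar>\<theta> q - \<theta> j\<bar>"
    and "c \<in> {1..k}" "m \<in> {1..k}"
  shows "real (if m < c then c - m else m - c) * \<Delta> \<le> \<bar>\<theta> c - \<theta> m\<bar>"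
proof (cases "m < c")
  case True
  have "real (c - m) * \<Delta> \<le> \<theta> c - \<theta> m" using gap_aux[OF inc sep, of m "c - m"] assms True by auto
  then show ?thesis using True by simp
next
  case False
  have "real (m - c) * \<Delta> \<le> \<theta> m - \<theta> c" using gap_aux[OF inc sep, of c "m - c"] assms False by auto
  then show ?thesis using False by simp
qed

definition LL :: "(nat \<Rightarrow> real) \<Rightarrow> nat \<Rightarrow> nat \<Rightarrow> real poly" where
  "LL \<theta> k j = smult (1 / (\<Prod>m\<in>{1..k}-{j}. \<theta> j - \<theta> m)) (\<Prod>m\<in>{1..k}-{j}. [:-\<theta> m, 1:])"

lemma poly_linprod: "poly (\<Prod>a\<in>A. [:- x a, 1:]) (t::real) = (\<Prod>a\<in>A. t - x a)"
  unfolding poly_prod by (rule prod.cong) auto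

lemma pderiv_sum: "pderiv (\<Sum>x\<in>A. f x) = (\<Sum>x\<in>A. pderiv (f x))"
  by (induction A rule: infinite_finite_induct) (auto simp: pderiv_add)

lemma pderiv_linprod: "poly (pderiv (\<Prod>a\<in>A. [:- x a, 1:])) (t::real) = (\<Sum>a\<in>A. \<Prod>b\<in>A-{a}. t - x b)"
  by (simp add: pderiv_prod poly_sum poly_prod pderiv_pCons)

lemma pderiv_linprod_at:
  assumes "finite A" "a0 \<in> A"
  fixes x :: "'a \<Rightarrow> real"
  shows "poly (pderiv (\<Prod>a\<in>A. [:- x a, 1:])) (x a0) = (\<Prod>b\<in>A-{a0}. x a0 - x b)"
proof -
  have "(\<Sum>a\<in>A. \<Prod>b\<in>A-{a}. x a0 - x b) = (\<Prod>b\<in>A-{a0}. x a0 - x b) + (\<Sum>a\<in>A-{a0}. \<Prod>b\<in>A-{a}. x a0 - x b)"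
    using assms by (simp add: sum.remove)
  moreover have "(\<Sum>a\<in>A-{a0}. \<Prod>b\<in>A-{a}. x a0 - x b) = 0"
    using assms by (intro sum.neutral ballI prod_zero) (auto intro!: bexI[of _ a0])
  ultimately show ?thesis by (simp add: pderiv_linprod)
qed

lemma degree_linprod: "finite A \<Longrightarrow> degree (\<Prod>a\<in>A. [:- x a, 1::real:]) = card A"
  by (subst degree_prod_eq_sum_degree) auto

lemma coeff_linprod: "finite A \<Longrightarrow> coeff (\<Prod>a\<in>A. [:- x a, 1::real:]) (card A) = 1"
  using lead_coeff_prod[of "\<lambda>a. [:- x a, 1::real:]" A] by (simp add: degree_linprod)

lemma interp:
  fixes \<theta> h :: "nat \<Rightarrow> real"
  assumes inj: "inj_on \<theta> {1..k}" and j0: "j0 \<in> {1..k}"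
  shows "(\<Prod>m\<in>{1..k}-{j0}. \<theta> j0 - \<theta> m) = poly (pderiv (\<Prod>l\<in>{1..k}. [:-h l,1:])) (\<theta> j0)
     - (\<Sum>j\<in>{1..k}. (\<Prod>l\<in>{1..k}. \<theta> j - h l) * poly (pderiv (LL \<theta> k j)) (\<theta> j0))"
proof -
  define P where "P = (\<Prod>l\<in>{1..k}. [:-h l,1::real:])"
  define W where "W = (\<Prod>m\<in>{1..k}. [:-\<theta> m,1::real:])"
  define Q where "Q = P - W - (\<Sum>j\<in>{1..k}. smult (poly P (\<theta> j)) (LL \<theta> k j))"
  have k1: "k \<ge> 1" using j0 by auto
  have dP: "degree P = k" "coeff P k = 1" unfolding P_def using degree_linprod[of "{1..k}" h] coeff_linprod[of "{1..k}" h] by auto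
  have dW: "degree W = k" "coeff W k = 1" unfolding W_def using degree_linprod[of "{1..k}" \<theta>] coeff_linprod[of "{1..k}" \<theta>] by auto
  have dPW: "degree (P - W) \<le> k - 1"
  proof (rule degree_le, intro allI impI)
    fix i assume "k - 1 < i"
    then have "i = k \<or> i > k" by auto
    then show "coeff (P - W) i = 0"
      using dP dW by (auto simp: coeff_eq_0)
  qed
  have dL: "degree (LL \<theta> k j) \<le> k - 1" if "j \<in> {1..k}" for j
  proof -
    have "degree (LL \<theta> k j) \<le> degree (\<Prod>m\<in>{1..k}-{j}. [:-\<theta> m, 1::real:])"
      unfolding LL_def by (rule degree_smult_le)
    also have "\<dots> = card ({1..k}-{j})" by (rule degree_linprod) simp
    also have "\<dots> = k - 1" using that by simp
    finally show ?thesis .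
  qed
  have dS: "degree (\<Sum>j\<in>{1..k}. smult (poly P (\<theta> j)) (LL \<theta> k j)) \<le> k - 1"
  proof (rule degree_sum_le)
    fix j assume "j \<in> {1..k}"
    then show "degree (smult (poly P (\<theta> j)) (LL \<theta> k j)) \<le> k - 1"
      using degree_smult_le[of "poly P (\<theta> j)" "LL \<theta> k j"] dL[of j] by linarith
  qed simp
  have dQ: "degree Q \<le> k - 1"
    unfolding Q_def by (rule degree_diff_le[OF dPW dS])
  have LLval: "poly (LL \<theta> k j) (\<theta> i) = (if i = j then 1 else 0)" if "i \<in> {1..k}" "j \<in> {1..k}" for i j
  proof (cases "i = j")
    case True
    have nz: "\<forall>m\<in>{1..k}-{j}. \<theta> j - \<theta> m \<noteq> 0"
    proof
      fix m assume m: "m \<in> {1..k}-{j}"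
      then have "\<theta> m \<noteq> \<theta> j" using inj that(2) unfolding inj_on_def by blast
      then show "\<theta> j - \<theta> m \<noteq> 0" by simp
    qed
    have "(\<Prod>m\<in>{1..k}-{j}. \<theta> j - \<theta> m) \<noteq> 0"
      using nz by (subst prod_zero_iff) auto
    then show ?thesis using True unfolding LL_def by (simp add: poly_linprod)
  next
    case False
    have "(\<Prod>m\<in>{1..k}-{j}. \<theta> i - \<theta> m) = 0"
      using that False by (intro prod_zero) auto
    then show ?thesis using False unfolding LL_def by (simp add: poly_linprod)
  qed
  have roots: "poly Q (\<theta> i) = 0" if "i \<in> {1..k}" for i
  proof -
    have "poly W (\<theta> i) = 0" unfolding W_def poly_linprod using that by (intro prod_zero) auto
    moreover have "(\<Sum>j\<in>{1..k}. poly P (\<theta> j) * poly (LL \<theta> k j) (\<theta> i)) = poly P (\<theta> i)"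
    proof -
      have "(\<Sum>j\<in>{1..k}. poly P (\<theta> j) * poly (LL \<theta> k j) (\<theta> i)) = (\<Sum>j\<in>{1..k}. if i = j then poly P (\<theta> j) else 0)"
        using LLval that by (intro sum.cong) auto
      also have "\<dots> = poly P (\<theta> i)" using that by simp
      finally show ?thesis .
    qed
    ultimately show ?thesis unfolding Q_def by (simp add: poly_sum)
  qed
  have Q0: "Q = 0"
  proof (rule ccontr)
    assume "Q \<noteq> 0"
    then have fin: "finite {x. poly Q x = 0}" by (rule poly_roots_finite)
    have "\<theta> ` {1..k} \<subseteq> {x. poly Q x = 0}" using roots by auto
    then have "card (\<theta> ` {1..k}) \<le> card {x. poly Q x = 0}" using fin by (rule card_mono[rotated])
    also have "\<dots> \<le> degree Q" using \<open>Q \<noteq> 0\<close> by (rule card_poly_roots_bound)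
    finally have "k \<le> k - 1" using card_image[OF inj] dQ by simp
    then show False using k1 by simp
  qed
  have PWS: "P = W + (\<Sum>j\<in>{1..k}. smult (poly P (\<theta> j)) (LL \<theta> k j))"
    using Q0 unfolding Q_def by (simp add: algebra_simps)
  have "pderiv P = pderiv (W + (\<Sum>j\<in>{1..k}. smult (poly P (\<theta> j)) (LL \<theta> k j)))"
    using arg_cong[OF PWS, of pderiv] .
  also have "\<dots> = pderiv W + (\<Sum>j\<in>{1..k}. smult (poly P (\<theta> j)) (pderiv (LL \<theta> k j)))"
    by (simp only: pderiv_add pderiv_sum pderiv_smult)
  finally have "pderiv P = pderiv W + (\<Sum>j\<in>{1..k}. smult (poly P (\<theta> j)) (pderiv (LL \<theta> k j)))" .
  then
  have "poly (pderiv P) (\<theta> j0) = poly (pderiv W) (\<theta> j0) + (\<Sum>j\<in>{1..k}. poly P (\<theta> j) * poly (pderiv (LL \<theta> k j)) (\<theta> j0))"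
    by (simp add: poly_sum)
  moreover have "poly (pderiv W) (\<theta> j0) = (\<Prod>m\<in>{1..k}-{j0}. \<theta> j0 - \<theta> m)"
    unfolding W_def using j0 by (intro pderiv_linprod_at) auto
  ultimately show ?thesis unfolding P_def by (simp add: poly_linprod)
qed

lemma bound_pderiv:
  fixes h :: "nat \<Rightarrow> real"
  assumes fin: "finite A" and far: "\<forall>l\<in>A. r \<le> \<bar>t - h l\<bar>" and r: "r > 0"
  shows "\<bar>poly (pderiv (\<Prod>l\<in>A. [:-h l,1:])) t\<bar> \<le> real (card A) / r * (\<Prod>l\<in>A. \<bar>t - h l\<bar>)"
proof -
  have "\<bar>poly (pderiv (\<Prod>l\<in>A. [:-h l,1:])) t\<bar> = \<bar>\<Sum>l\<in>A. \<Prod>m\<in>A-{l}. t - h m\<bar>"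
    by (simp add: pderiv_linprod)
  also have "\<dots> \<le> (\<Sum>l\<in>A. \<bar>\<Prod>m\<in>A-{l}. t - h m\<bar>)" by (rule sum_abs)
  also have "\<dots> \<le> (\<Sum>l\<in>A. (\<Prod>m\<in>A. \<bar>t - h m\<bar>) / r)"
  proof (rule sum_mono)
    fix l assume l: "l \<in> A"
    have e: "(\<Prod>m\<in>A. \<bar>t - h m\<bar>) = \<bar>t - h l\<bar> * (\<Prod>m\<in>A-{l}. \<bar>t - h m\<bar>)"
      using fin l by (simp add: prod.remove)
    have "r * (\<Prod>m\<in>A-{l}. \<bar>t - h m\<bar>) \<le> \<bar>t - h l\<bar> * (\<Prod>m\<in>A-{l}. \<bar>t - h m\<bar>)"
      by (rule mult_right_mono) (use far l in \<open>auto intro: prod_nonneg\<close>)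
    then have "(\<Prod>m\<in>A-{l}. \<bar>t - h m\<bar>) \<le> (\<Prod>m\<in>A. \<bar>t - h m\<bar>) / r"
      unfolding e using r by (simp add: pos_le_divide_eq mult.commute)
    then show "\<bar>\<Prod>m\<in>A-{l}. t - h m\<bar> \<le> (\<Prod>m\<in>A. \<bar>t - h m\<bar>) / r"
      by (simp add: abs_prod)
  qed
  also have "\<dots> = real (card A) / r * (\<Prod>m\<in>A. \<bar>t - h m\<bar>)" by simp
  finally show ?thesis .
qed

lemma prod_gap_lower:
  fixes \<theta> :: "nat \<Rightarrow> real"
  assumes inc: "\<forall>i\<in>{1..k}. \<forall>j\<in>{1..k}. i < j \<longrightarrow> \<theta> i < \<theta> j"
    and sep: "\<forall>q\<in>{1..k}. \<forall>j\<in>{1..k}. q \<noteq> j \<longrightarrow> \<Delta> \<le> \<bar>\<theta> q - \<theta> j\<bar>"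
    and D: "\<Delta> > 0" and j: "j \<in> {1..k}"
  shows "\<Delta> ^ (k-1) * real (Mf (k-1)) \<le> (\<Prod>m\<in>{1..k}-{j}. \<bar>\<theta> j - \<theta> m\<bar>)"
proof -
  have "(\<Prod>m\<in>{1..k}-{j}. real (if m < j then j - m else m - j) * \<Delta>) \<le> (\<Prod>m\<in>{1..k}-{j}. \<bar>\<theta> j - \<theta> m\<bar>)"
    by (rule prod_mono) (use gap[OF inc sep j] D in auto)
  moreover have "(\<Prod>m\<in>{1..k}-{j}. real (if m < j then j - m else m - j) * \<Delta>) =
     (\<Prod>m\<in>{1..k}-{j}. real (if m < j then j - m else m - j)) * \<Delta> ^ (k-1)"
    using j by (simp add: prod.distrib)
  moreover have "(\<Prod>m\<in>{1..k}-{j}. real (if m < j then j - m else m - j)) = fact (j-1) * fact (k-j)"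
    using prod_dist[of j k real] j by (simp add: fact_prod_real)
  moreover have "real (Mf (k-1)) \<le> fact (j-1) * fact (k-j)"
  proof -
    have "Mf ((j-1)+(k-j)) \<le> fact (j-1) * fact (k-j)" by (rule Mf_le)
    moreover have "(j-1)+(k-j) = k-1" using j by auto
    ultimately have a: "Mf (k-1) \<le> fact (j-1) * fact (k-j)" by simp
    have "real (Mf (k-1)) \<le> real (fact (j-1) * fact (k-j))" using a by (simp only: of_nat_le_iff)
    then show ?thesis by (simp only: of_nat_mult of_nat_fact)
  qed
  then have "\<Delta> ^ (k-1) * real (Mf (k-1)) \<le> \<Delta> ^ (k-1) * (fact (j-1) * fact (k-j))"
    using D by (intro mult_left_mono) auto
  ultimately show ?thesis by (simp add: mult.commute)
qed

lemma core:
  fixes \<theta> h :: "nat \<Rightarrow> real" and \<Delta> \<epsilon> :: real and k j0 :: nat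
  assumes k: "k \<ge> 2"
    and inc: "\<forall>i\<in>{1..k}. \<forall>j\<in>{1..k}. i < j \<longrightarrow> \<theta> i < \<theta> j"
    and sep: "\<forall>q\<in>{1..k}. \<forall>j\<in>{1..k}. q \<noteq> j \<longrightarrow> \<Delta> \<le> \<bar>\<theta> q - \<theta> j\<bar>"
    and D: "\<Delta> > 0"
    and small: "\<forall>j\<in>{1..k}. (\<Prod>l\<in>{1..k}. \<bar>\<theta> j - h l\<bar>) < \<epsilon>"
    and eps: "4 * \<epsilon> \<le> \<Delta> ^ k * lam k"
    and j0: "j0 \<in> {1..k}"
  shows "\<exists>l\<in>{1..k}. \<bar>\<theta> j0 - h l\<bar> < \<Delta>/2"
proof (rule ccontr)
  assume "\<not> ?thesis"
  then have far: "\<forall>l\<in>{1..k}. \<Delta>/2 \<le> \<bar>\<theta> j0 - h l\<bar>" by auto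
  have P0: "(\<Prod>l\<in>{1..k}. \<bar>\<theta> j0 - h l\<bar>) < \<epsilon>" using small j0 by blast
  have epos: "\<epsilon> > 0" using P0 by (smt (verit) prod_nonneg abs_ge_zero)
  show False
  proof (cases "k \<le> 3")
    case True
    have "(\<Prod>l\<in>{1..k}. \<Delta>/2) \<le> (\<Prod>l\<in>{1..k}. \<bar>\<theta> j0 - h l\<bar>)"
      by (rule prod_mono) (use far D in auto)
    then have lt: "(\<Delta>/2)^k < \<epsilon>" using P0 by simp
    have "k = 2 \<or> k = 3" using True k by auto
    then show False
    proof
      assume k2: "k = 2"
      have "lam k = 1" unfolding lam_def k2 by simp
      then show False using lt eps k2 by (simp add: power2_eq_square)
    next
      assume k3: "k = 3"
      have l3: "lam 3 = 1/2" unfolding lam_def xi_def by simp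
      have e3: "4*\<epsilon> \<le> \<Delta>^3 * lam 3" using eps k3 by simp
      have a: "4*\<epsilon> \<le> \<Delta>^3 * (1/2)" using e3 unfolding l3 .
      have b: "(\<Delta>/2)^3 < \<epsilon>" using lt k3 by simp
      have "(\<Delta>/2)^3 = \<Delta>^3/8" by (simp add: power_divide)
      then show False using a b by linarith
    qed
  next
    case False
    then have k4: "k \<ge> 4" by simp
    define t where "t = \<theta> j0"
    define A where "A = {1..k} - {j0}"
    define W0 where "W0 = (\<Prod>m\<in>A. t - \<theta> m)"
    define G where "G = real (Mf (k-1))"
    define X where "X = \<bar>W0\<bar>"
    have finA: "finite A" and cardA: "card A = k - 1" using j0 unfolding A_def by auto
    have inj: "inj_on \<theta> {1..k}"
    proof (rule inj_onI)
      fix x y assume "x \<in> {1..k}" "y \<in> {1..k}" "\<theta> x = \<theta> y"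
      then show "x = y" using inc by (metis less_irrefl linorder_neqE_nat)
    qed
    have Gpos: "G > 0" unfolding G_def Mf_def by simp
    have cj: "\<Delta> ^ (k-1) * G \<le> (\<Prod>m\<in>{1..k}-{j}. \<bar>\<theta> j - \<theta> m\<bar>)" if "j \<in> {1..k}" for j
      unfolding G_def by (rule prod_gap_lower[OF inc sep D that])
    have XG: "\<Delta> ^ (k-1) * G \<le> X" using cj[OF j0] unfolding X_def W0_def A_def t_def by (simp add: abs_prod)
    have Xpos: "X > 0" using XG D Gpos by (smt (verit) mult_pos_pos zero_less_power)
    have key: "(2*real k - 1) * lam k \<le> 2 * G" unfolding G_def using lam_key[OF k4, of 1] k4 by simp
    define DG where "DG = \<Delta> ^ k * G"
    have DGpos: "DG > 0" unfolding DG_def using D Gpos by simp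
    have pk: "\<Delta> ^ k = \<Delta> * \<Delta> ^ (k-1)" using k by (cases k) auto
    have DG_le: "DG \<le> \<Delta> * X"
    proof -
      have "DG = \<Delta> * (\<Delta> ^ (k-1) * G)" unfolding DG_def pk by (simp only: mult.assoc)
      also have "\<dots> \<le> \<Delta> * X" using XG D by (simp add: mult_left_mono)
      finally show ?thesis .
    qed
    have id: "W0 = poly (pderiv (\<Prod>l\<in>{1..k}. [:-h l,1:])) t
       - (\<Sum>j\<in>{1..k}. (\<Prod>l\<in>{1..k}. \<theta> j - h l) * poly (pderiv (LL \<theta> k j)) t)"
      unfolding W0_def A_def t_def by (rule interp[OF inj j0])
    have ba: "\<bar>poly (pderiv (\<Prod>l\<in>{1..k}. [:-h l,1:])) t\<bar> < 2 * real k * \<epsilon> / \<Delta>"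
    proof -
      have "\<bar>poly (pderiv (\<Prod>l\<in>{1..k}. [:-h l,1:])) t\<bar> \<le> real (card {1..k}) / (\<Delta>/2) * (\<Prod>l\<in>{1..k}. \<bar>t - h l\<bar>)"
        by (rule bound_pderiv) (use far D in \<open>auto simp: t_def\<close>)
      also have "\<dots> < real (card {1..k}) / (\<Delta>/2) * \<epsilon>"
        using P0 D k unfolding t_def by (intro mult_strict_left_mono) auto
      also have "\<dots> = 2 * real k * \<epsilon> / \<Delta>" by simp
      finally show ?thesis .
    qed
    have bb: "\<bar>(\<Prod>l\<in>{1..k}. \<theta> j0 - h l) * poly (pderiv (LL \<theta> k j0)) t\<bar> \<le> \<epsilon> * ((real k - 1) / \<Delta>)"
    proof -
      have L: "poly (pderiv (LL \<theta> k j0)) t = (1 / W0) * poly (pderiv (\<Prod>m\<in>A. [:-\<theta> m, 1:])) t"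
        unfolding LL_def W0_def A_def t_def by (simp add: pderiv_smult)
      have "\<bar>poly (pderiv (\<Prod>m\<in>A. [:-\<theta> m, 1:])) t\<bar> \<le> real (card A) / \<Delta> * (\<Prod>m\<in>A. \<bar>t - \<theta> m\<bar>)"
        by (rule bound_pderiv[OF finA]) (use sep j0 D in \<open>auto simp: A_def t_def\<close>)
      also have "\<dots> = (real k - 1) / \<Delta> * X" unfolding X_def W0_def cardA using k by (simp add: abs_prod)
      finally have Y: "\<bar>poly (pderiv (\<Prod>m\<in>A. [:-\<theta> m, 1:])) t\<bar> \<le> (real k - 1) / \<Delta> * X" .
      have "\<bar>poly (pderiv (LL \<theta> k j0)) t\<bar> = \<bar>poly (pderiv (\<Prod>m\<in>A. [:-\<theta> m, 1:])) t\<bar> / X"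
        unfolding L X_def by (simp add: abs_mult)
      also have "\<dots> \<le> (real k - 1) / \<Delta>" using Y Xpos by (simp add: pos_divide_le_eq)
      finally have Lb: "\<bar>poly (pderiv (LL \<theta> k j0)) t\<bar> \<le> (real k - 1) / \<Delta>" .
      have Pb: "\<bar>\<Prod>l\<in>{1..k}. \<theta> j0 - h l\<bar> \<le> \<epsilon>" using P0 by (simp add: abs_prod)
      show ?thesis unfolding abs_mult by (rule mult_mono[OF Pb Lb]) (use epos in auto)
    qed
    have bc: "\<bar>(\<Prod>l\<in>{1..k}. \<theta> j - h l) * poly (pderiv (LL \<theta> k j)) t\<bar> \<le> \<epsilon> * (X / DG)" if j: "j \<in> A" for j
    proof -
      have jk: "j \<in> {1..k}" "j \<noteq> j0" using j unfolding A_def by auto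
      define c where "c = (\<Prod>m\<in>{1..k}-{j}. \<theta> j - \<theta> m)"
      define R where "R = (\<Prod>b\<in>({1..k}-{j})-{j0}. t - \<theta> b)"
      have L: "poly (pderiv (LL \<theta> k j)) t = (1 / c) * R"
        unfolding LL_def c_def R_def t_def using jk j0
        by (simp add: pderiv_smult pderiv_linprod_at)
      have W0R: "W0 = (t - \<theta> j) * R"
      proof -
        have "W0 = (t - \<theta> j) * (\<Prod>b\<in>A-{j}. t - \<theta> b)" unfolding W0_def using finA j by (simp add: prod.remove)
        moreover have "A - {j} = ({1..k}-{j})-{j0}" unfolding A_def by auto
        ultimately show ?thesis unfolding R_def by simp
      qed
      have tj: "\<Delta> \<le> \<bar>t - \<theta> j\<bar>" using sep jk j0 unfolding t_def by auto
      have cb: "\<Delta> ^ (k-1) * G \<le> \<bar>c\<bar>" unfolding c_def abs_prod using cj[OF jk(1)] .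
      have cpos: "\<bar>c\<bar> > 0" using cb D Gpos by (smt (verit) mult_pos_pos zero_less_power)
      have "\<bar>poly (pderiv (LL \<theta> k j)) t\<bar> = X / (\<bar>t - \<theta> j\<bar> * \<bar>c\<bar>)"
      proof -
        have tj0: "\<bar>t - \<theta> j\<bar> \<noteq> 0" using tj D by auto
        have "X / (\<bar>t - \<theta> j\<bar> * \<bar>c\<bar>) = (\<bar>t - \<theta> j\<bar> * \<bar>R\<bar>) / (\<bar>t - \<theta> j\<bar> * \<bar>c\<bar>)"
          unfolding X_def W0R abs_mult ..
        also have "\<dots> = \<bar>R\<bar> / \<bar>c\<bar>" using tj0 by (rule mult_divide_mult_cancel_left)
        finally show ?thesis unfolding L by (simp add: abs_mult)
      qed
      also have "\<dots> \<le> X / DG"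
      proof (rule divide_left_mono)
        have "DG = \<Delta> * (\<Delta> ^ (k-1) * G)" unfolding DG_def pk by (simp only: mult.assoc)
        also have "\<dots> \<le> \<bar>t - \<theta> j\<bar> * \<bar>c\<bar>" using tj cb D Gpos by (intro mult_mono) auto
        finally show "DG \<le> \<bar>t - \<theta> j\<bar> * \<bar>c\<bar>" .
      qed (use Xpos DGpos tj D cpos in auto)
      finally have Lb: "\<bar>poly (pderiv (LL \<theta> k j)) t\<bar> \<le> X / DG" .
      have Pb: "\<bar>\<Prod>l\<in>{1..k}. \<theta> j - h l\<bar> \<le> \<epsilon>" using small jk by (simp add: abs_prod less_imp_le)
      show ?thesis unfolding abs_mult by (rule mult_mono[OF Pb Lb]) (use epos in auto)
    qed
    have sumb: "\<bar>\<Sum>j\<in>{1..k}. (\<Prod>l\<in>{1..k}. \<theta> j - h l) * poly (pderiv (LL \<theta> k j)) t\<bar>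
        \<le> \<epsilon> * ((real k - 1) / \<Delta>) + (real k - 1) * (\<epsilon> * (X / DG))"
    proof -
      have "(\<Sum>j\<in>{1..k}. (\<Prod>l\<in>{1..k}. \<theta> j - h l) * poly (pderiv (LL \<theta> k j)) t)
         = (\<Prod>l\<in>{1..k}. \<theta> j0 - h l) * poly (pderiv (LL \<theta> k j0)) t
           + (\<Sum>j\<in>A. (\<Prod>l\<in>{1..k}. \<theta> j - h l) * poly (pderiv (LL \<theta> k j)) t)"
        unfolding A_def using j0 by (simp add: sum.remove)
      moreover have "\<bar>\<Sum>j\<in>A. (\<Prod>l\<in>{1..k}. \<theta> j - h l) * poly (pderiv (LL \<theta> k j)) t\<bar> \<le> (real k - 1) * (\<epsilon> * (X / DG))"
      proof -
        have "\<bar>\<Sum>j\<in>A. (\<Prod>l\<in>{1..k}. \<theta> j - h l) * poly (pderiv (LL \<theta> k j)) t\<bar>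
            \<le> (\<Sum>j\<in>A. \<bar>(\<Prod>l\<in>{1..k}. \<theta> j - h l) * poly (pderiv (LL \<theta> k j)) t\<bar>)" by (rule sum_abs)
        also have "\<dots> \<le> (\<Sum>j\<in>A. \<epsilon> * (X / DG))" by (rule sum_mono) (rule bc)
        also have "\<dots> = (real k - 1) * (\<epsilon> * (X / DG))" using cardA k by simp
        finally show ?thesis .
      qed
      ultimately show ?thesis using bb by (smt (verit) abs_triangle_ineq)
    qed
    have "X \<le> \<bar>poly (pderiv (\<Prod>l\<in>{1..k}. [:-h l,1:])) t\<bar> + \<bar>\<Sum>j\<in>{1..k}. (\<Prod>l\<in>{1..k}. \<theta> j - h l) * poly (pderiv (LL \<theta> k j)) t\<bar>"
      unfolding X_def by (subst id) (rule abs_triangle_ineq4)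
    then have X1: "X < 2 * real k * \<epsilon> / \<Delta> + \<epsilon> * ((real k - 1) / \<Delta>) + (real k - 1) * (\<epsilon> * (X / DG))"
      using ba sumb by linarith
    have inv: "1 / \<Delta> \<le> X / DG" using DG_le D DGpos by (simp add: field_simps)
    have "2 * real k * \<epsilon> / \<Delta> + \<epsilon> * ((real k - 1) / \<Delta>) = (3 * real k - 1) * \<epsilon> * (1 / \<Delta>)"
      using D by (simp add: field_simps)
    also have "\<dots> \<le> (3 * real k - 1) * \<epsilon> * (X / DG)"
      using inv epos k by (intro mult_left_mono) auto
    finally have "X < (3 * real k - 1) * \<epsilon> * (X / DG) + (real k - 1) * (\<epsilon> * (X / DG))" using X1 by linarith
    moreover have "(3 * real k - 1) * \<epsilon> * (X / DG) + (real k - 1) * (\<epsilon> * (X / DG)) = (4 * real k - 2) * \<epsilon> * X / DG"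
      using DGpos by (simp add: field_simps)
    ultimately have "X < (4 * real k - 2) * \<epsilon> * X / DG" by linarith
    then have "X * DG < (4 * real k - 2) * \<epsilon> * X" using DGpos by (simp add: field_simps)
    then have "DG < (4 * real k - 2) * \<epsilon>" using Xpos by (simp add: mult.commute mult_less_cancel_left_pos)
    moreover have "(4 * real k - 2) * \<epsilon> \<le> DG"
    proof -
      have "(2*real k - 1) * (4 * \<epsilon>) \<le> (2*real k - 1) * (\<Delta> ^ k * lam k)"
        using eps k by (intro mult_left_mono) auto
      also have "\<dots> = \<Delta> ^ k * ((2*real k - 1) * lam k)" by simp
      also have "\<dots> \<le> \<Delta> ^ k * (2 * G)" using key D by (intro mult_left_mono) auto
      finally have "(2*real k - 1) * (4 * \<epsilon>) \<le> \<Delta> ^ k * (2 * G)" .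
      then show ?thesis unfolding DG_def by (simp add: algebra_simps)
    qed
    ultimately show False by simp
  qed
qed

lemma prod_lower2:
  fixes \<theta> y :: "nat \<Rightarrow> real"
  assumes inc: "\<forall>i\<in>{1..k}. \<forall>j\<in>{1..k}. i < j \<longrightarrow> \<theta> i < \<theta> j"
    and sep: "\<forall>q\<in>{1..k}. \<forall>j\<in>{1..k}. q \<noteq> j \<longrightarrow> \<Delta> \<le> \<bar>\<theta> q - \<theta> j\<bar>"
    and D: "\<Delta> > 0" and j: "j \<in> {1..k}" and k: "k \<ge> 2"
    and close: "\<forall>m\<in>{1..k}. \<bar>\<theta> m - y m\<bar> < \<Delta>/2"
  shows "(\<Delta>/2)^(k-1) * fact (k-2) \<le> (\<Prod>m\<in>{1..k}-{j}. \<bar>\<theta> j - y m\<bar>)"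
proof -
  define dd where "dd = (\<lambda>m. if m < j then j - m else m - j)"
  have each: "(\<Delta>/2) * (2 * real (dd m) - 1) \<le> \<bar>\<theta> j - y m\<bar>" if m: "m \<in> {1..k}-{j}" for m
  proof -
    have g: "real (dd m) * \<Delta> \<le> \<bar>\<theta> j - \<theta> m\<bar>" unfolding dd_def using gap[OF inc sep j, of m] m by auto
    have c: "\<bar>\<theta> m - y m\<bar> < \<Delta>/2" using close m by auto
    have "\<bar>\<theta> j - \<theta> m\<bar> \<le> \<bar>\<theta> j - y m\<bar> + \<bar>\<theta> m - y m\<bar>" by linarith
    then show ?thesis using g c by (simp add: algebra_simps)
  qed
  have dd1: "dd m \<ge> 1" if "m \<in> {1..k}-{j}" for m using that unfolding dd_def by auto
  have le1: "(\<Prod>m\<in>{1..k}-{j}. (\<Delta>/2) * (2 * real (dd m) - 1)) \<le> (\<Prod>m\<in>{1..k}-{j}. \<bar>\<theta> j - y m\<bar>)"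
  proof (rule prod_mono)
    fix m assume m: "m \<in> {1..k}-{j}"
    have "1 \<le> real (dd m)" using dd1[OF m] by simp
    then show "0 \<le> \<Delta>/2 * (2 * real (dd m) - 1) \<and> \<Delta>/2 * (2 * real (dd m) - 1) \<le> \<bar>\<theta> j - y m\<bar>"
      using each[OF m] D by simp
  qed
  have e1: "(\<Prod>m\<in>{1..k}-{j}. (\<Delta>/2) * (2 * real (dd m) - 1)) = (\<Delta>/2)^(k-1) * (\<Prod>m\<in>{1..k}-{j}. 2 * real (dd m) - 1)"
  proof -
    have "(\<Prod>m\<in>{1..k}-{j}. \<Delta>/2) = (\<Delta>/2)^(k-1)" using j by simp
    then show ?thesis by (simp only: prod.distrib)
  qed
  have e2: "(\<Prod>m\<in>{1..k}-{j}. 2 * real (dd m) - 1) = real (oddf (j-1)) * real (oddf (k-j))"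
    unfolding dd_def oddf_prod using prod_dist[of j k "\<lambda>d. 2 * real d - 1"] j by simp
  have "(fact (k-2) :: real) \<le> real (oddf (j-1)) * real (oddf (k-j))"
  proof -
    have "fact ((j-1)+(k-j)-1) \<le> oddf (j-1) * oddf (k-j)" using oddf_ge[of "(j-1)+(k-j)"] j k by auto
    moreover have "(j-1)+(k-j)-1 = k-2" using j k by auto
    ultimately have a: "fact (k-2) \<le> oddf (j-1) * oddf (k-j)" by simp
    have "real (fact (k-2)) \<le> real (oddf (j-1) * oddf (k-j))" using a by (simp only: of_nat_le_iff)
    then show ?thesis by (simp only: of_nat_mult of_nat_fact)
  qed
  then have "(\<Delta>/2)^(k-1) * fact (k-2) \<le> (\<Delta>/2)^(k-1) * (real (oddf (j-1)) * real (oddf (k-j)))"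
    using D by (intro mult_left_mono) auto
  also have "\<dots> = (\<Prod>m\<in>{1..k}-{j}. (\<Delta>/2) * (2 * real (dd m) - 1))" unfolding e1 e2 ..
  also have "\<dots> \<le> (\<Prod>m\<in>{1..k}-{j}. \<bar>\<theta> j - y m\<bar>)" by (rule le1)
  finally show ?thesis .
qed

theorem corollary3p2:
  fixes k :: nat and \<theta> \<theta>h :: "nat \<Rightarrow> real" and \<epsilon> :: real
  assumes "k \<ge> 2"
    and "\<forall>j\<in>{1..k}. - (pi/2) \<le> \<theta> j \<and> \<theta> j \<le> pi/2"
    and "\<forall>i\<in>{1..k}. \<forall>j\<in>{1..k}. i < j \<longrightarrow> \<theta> i < \<theta> j"
    and "\<forall>j\<in>{1..k}. - (pi/2) \<le> \<theta>h j \<and> \<theta>h j \<le> pi/2"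
    and "\<epsilon> > 0"
    and "linf_norm k (eta k k (\<lambda>j. exp (\<i> * of_real (\<theta> j))) (\<lambda>j. exp (\<i> * of_real (\<theta>h j))))
           < (2 / pi) ^ k * \<epsilon>"
    and "Min {\<bar>\<theta> q - \<theta> j\<bar> | q j. q \<in> {1..k} \<and> j \<in> {1..k} \<and> q \<noteq> j}
           \<ge> (4 * \<epsilon> / lam k) powr (1 / real k)"
  shows "\<exists>\<sigma>::nat \<Rightarrow> nat. \<sigma> permutes {1..k} \<and>
    (\<forall>j\<in>{1..k}.
      \<bar>\<theta>h (\<sigma> j) - \<theta> j\<bar> < Min {\<bar>\<theta> q - \<theta> j\<bar> | q j. q \<in> {1..k} \<and> j \<in> {1..k} \<and> q \<noteq> j} / 2 \<and>
      \<bar>\<theta>h (\<sigma> j) - \<theta> j\<bar> \<le> 2 ^ (k - 1) * \<epsilon> /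
        (fact (k - 2) * (Min {\<bar>\<theta> q - \<theta> j\<bar> | q j. q \<in> {1..k} \<and> j \<in> {1..k} \<and> q \<noteq> j}) ^ (k - 1)))"
proof -
  note k = assms(1) and inc = assms(3) and eps0 = assms(5)
  define S where "S = {\<bar>\<theta> q - \<theta> j\<bar> | q j. q \<in> {1..k} \<and> j \<in> {1..k} \<and> q \<noteq> j}"
  define \<Delta> where "\<Delta> = Min S"
  have SM: "Min {\<bar>\<theta> q - \<theta> j\<bar> | q j. q \<in> {1..k} \<and> j \<in> {1..k} \<and> q \<noteq> j} = \<Delta>"
    unfolding \<Delta>_def S_def ..
  have finS: "finite S"
  proof -
    have "S \<subseteq> (\<lambda>(q,j). \<bar>\<theta> q - \<theta> j\<bar>) ` ({1..k} \<times> {1..k})" unfolding S_def by auto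
    then show ?thesis by (rule finite_subset) auto
  qed
  have neS: "S \<noteq> {}"
  proof -
    have "\<bar>\<theta> 1 - \<theta> 2\<bar> \<in> S" unfolding S_def using k by force
    then show ?thesis by auto
  qed
  have sep: "\<forall>q\<in>{1..k}. \<forall>j\<in>{1..k}. q \<noteq> j \<longrightarrow> \<Delta> \<le> \<bar>\<theta> q - \<theta> j\<bar>"
  proof (intro ballI impI)
    fix q j assume "q \<in> {1..k}" "j \<in> {1..k}" "q \<noteq> j"
    then have "\<bar>\<theta> q - \<theta> j\<bar> \<in> S" unfolding S_def by blast
    then show "\<Delta> \<le> \<bar>\<theta> q - \<theta> j\<bar>" unfolding \<Delta>_def using finS by (rule Min_le[rotated])
  qed
  have Dpos: "\<Delta> > 0"
  proof -
    have "\<Delta> \<in> S" unfolding \<Delta>_def using finS neS by (rule Min_in)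
    then obtain q j where qj: "\<Delta> = \<bar>\<theta> q - \<theta> j\<bar>" "q \<in> {1..k}" "j \<in> {1..k}" "q \<noteq> j"
      unfolding S_def by blast
    have "\<theta> q \<noteq> \<theta> j"
    proof (cases "q < j")
      case True then show ?thesis using inc qj by force
    next
      case False then have "j < q" using qj by simp
      then show ?thesis using inc qj by force
    qed
    then show ?thesis using qj by simp
  qed
  have lampos: "lam k > 0"
  proof (cases "k \<ge> 4")
    case True
    have "Mf (k-4) > 0" unfolding Mf_def by simp
    then show ?thesis using lam_Mf[OF True] by simp
  next
    case False
    then have "k = 2 \<or> k = 3" using k by auto
    then show ?thesis unfolding lam_def xi_def by auto
  qed
  have eps: "4 * \<epsilon> \<le> \<Delta> ^ k * lam k"
  proof -
    define x where "x = 4 * \<epsilon> / lam k"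
    have xpos: "x > 0" unfolding x_def using eps0 lampos by simp
    have "x powr (1 / real k) \<le> \<Delta>" using assms(7) unfolding SM x_def .
    then have "(x powr (1 / real k)) ^ k \<le> \<Delta> ^ k" by (rule power_mono) simp
    moreover have "(x powr (1 / real k)) ^ k = x"
    proof -
      have "(x powr (1 / real k)) ^ k = (x powr (1 / real k)) powr (real k)"
        using xpos by (simp add: powr_realpow)
      also have "\<dots> = x powr (1 / real k * real k)" by (simp add: powr_powr)
      also have "\<dots> = x" using k xpos by simp
      finally show ?thesis .
    qed
    ultimately have "x \<le> \<Delta> ^ k" by simp
    then show ?thesis unfolding x_def using lampos by (simp add: pos_divide_le_eq)
  qed
  have small: "\<forall>j\<in>{1..k}. (\<Prod>l\<in>{1..k}. \<bar>\<theta> j - \<theta>h l\<bar>) < \<epsilon>"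
  proof
    fix j assume j: "j \<in> {1..k}"
    define z where "z = (\<lambda>j. exp (\<i> * complex_of_real (\<theta> j)))"
    define zh where "zh = (\<lambda>j. exp (\<i> * complex_of_real (\<theta>h j)))"
    have "(\<Prod>l\<in>{1..k}. \<bar>\<theta> j - \<theta>h l\<bar>) \<le> (\<Prod>l\<in>{1..k}. pi/2 * cmod (z j - zh l))"
    proof (rule prod_mono)
      fix l assume l: "l \<in> {1..k}"
      show "0 \<le> \<bar>\<theta> j - \<theta>h l\<bar> \<and> \<bar>\<theta> j - \<theta>h l\<bar> \<le> pi/2 * cmod (z j - zh l)"
        unfolding z_def zh_def using chord assms(2) assms(4) j l by auto
    qed
    also have "\<dots> = (\<Prod>l\<in>{1..k}. pi/2) * (\<Prod>l\<in>{1..k}. cmod (z j - zh l))" by (rule prod.distrib)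
    also have "\<dots> = (pi/2)^k * eta k k z zh j" unfolding eta_def by simp
    also have "\<dots> \<le> (pi/2)^k * linf_norm k (eta k k z zh)"
    proof (rule mult_left_mono)
      have "\<bar>eta k k z zh j\<bar> \<le> linf_norm k (eta k k z zh)"
        unfolding linf_norm_def using j by (intro Max_ge) auto
      then show "eta k k z zh j \<le> linf_norm k (eta k k z zh)" by simp
    qed simp
    also have "\<dots> < (pi/2)^k * ((2/pi)^k * \<epsilon>)"
      using assms(6) unfolding z_def zh_def by (intro mult_strict_left_mono) auto
    also have "\<dots> = \<epsilon>" by (simp add: power_mult_distrib[symmetric])
    finally show "(\<Prod>l\<in>{1..k}. \<bar>\<theta> j - \<theta>h l\<bar>) < \<epsilon>" .
  qed
  have ex: "\<exists>l. l \<in> {1..k} \<and> \<bar>\<theta> j - \<theta>h l\<bar> < \<Delta>/2" if "j \<in> {1..k}" for j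
    using core[OF k inc sep Dpos small eps that] by blast
  define \<sigma> where "\<sigma> = (\<lambda>j. if j \<in> {1..k} then (SOME l. l \<in> {1..k} \<and> \<bar>\<theta> j - \<theta>h l\<bar> < \<Delta>/2) else j)"
  have \<sigma>1: "\<sigma> j \<in> {1..k} \<and> \<bar>\<theta> j - \<theta>h (\<sigma> j)\<bar> < \<Delta>/2" if "j \<in> {1..k}" for j
    unfolding \<sigma>_def using someI_ex[OF ex[OF that]] that by simp
  have injs: "inj_on \<sigma> {1..k}"
  proof (rule inj_onI)
    fix a b assume ab: "a \<in> {1..k}" "b \<in> {1..k}" "\<sigma> a = \<sigma> b"
    have h1: "\<bar>\<theta> a - \<theta>h (\<sigma> a)\<bar> < \<Delta>/2" using \<sigma>1[OF ab(1)] by blast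
    have h2: "\<bar>\<theta> b - \<theta>h (\<sigma> a)\<bar> < \<Delta>/2" using \<sigma>1[OF ab(2)] ab(3) by simp
    have "\<bar>\<theta> a - \<theta> b\<bar> < \<Delta>" using h1 h2 by linarith
    then show "a = b" using sep ab by force
  qed
  have img: "\<sigma> ` {1..k} = {1..k}"
    by (rule endo_inj_surj) (use \<sigma>1 injs in auto)
  have perm: "\<sigma> permutes {1..k}"
    by (rule bij_imp_permutes) (use injs img in \<open>auto simp: bij_betw_def \<sigma>_def\<close>)
  show ?thesis
    unfolding SM
  proof (intro exI conjI ballI)
    show "\<sigma> permutes {1..k}" by (rule perm)
  next
    fix j assume j: "j \<in> {1..k}"
    show "\<bar>\<theta>h (\<sigma> j) - \<theta> j\<bar> < \<Delta> / 2" using \<sigma>1[OF j] by (simp add: abs_minus_commute)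
  next
    fix j assume j: "j \<in> {1..k}"
    have close: "\<forall>m\<in>{1..k}. \<bar>\<theta> m - \<theta>h (\<sigma> m)\<bar> < \<Delta>/2" using \<sigma>1 by blast
    have low: "(\<Delta>/2)^(k-1) * fact (k-2) \<le> (\<Prod>m\<in>{1..k}-{j}. \<bar>\<theta> j - \<theta>h (\<sigma> m)\<bar>)"
      by (rule prod_lower2[OF inc sep Dpos j k close])
    have bij: "bij_betw \<sigma> {1..k} {1..k}" using injs img by (simp add: bij_betw_def)
    have "(\<Prod>l\<in>{1..k}. \<bar>\<theta> j - \<theta>h l\<bar>) = (\<Prod>m\<in>{1..k}. \<bar>\<theta> j - \<theta>h (\<sigma> m)\<bar>)"
      using prod.reindex_bij_betw[OF bij, of "\<lambda>l. \<bar>\<theta> j - \<theta>h l\<bar>"] by simp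
    also have "\<dots> = \<bar>\<theta> j - \<theta>h (\<sigma> j)\<bar> * (\<Prod>m\<in>{1..k}-{j}. \<bar>\<theta> j - \<theta>h (\<sigma> m)\<bar>)"
      using j by (simp add: prod.remove)
    finally have eqP: "(\<Prod>l\<in>{1..k}. \<bar>\<theta> j - \<theta>h l\<bar>) = \<bar>\<theta> j - \<theta>h (\<sigma> j)\<bar> * (\<Prod>m\<in>{1..k}-{j}. \<bar>\<theta> j - \<theta>h (\<sigma> m)\<bar>)" .
    have Pj0: "(\<Prod>l\<in>{1..k}. \<bar>\<theta> j - \<theta>h l\<bar>) < \<epsilon>" using small j by blast
    have Pj: "\<bar>\<theta> j - \<theta>h (\<sigma> j)\<bar> * (\<Prod>m\<in>{1..k}-{j}. \<bar>\<theta> j - \<theta>h (\<sigma> m)\<bar>) < \<epsilon>"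
      using Pj0 eqP by linarith
    define x where "x = \<bar>\<theta>h (\<sigma> j) - \<theta> j\<bar>"
    define B where "B = (\<Delta>/2)^(k-1) * fact (k-2)"
    have Bpos: "B > 0" unfolding B_def using Dpos by simp
    have "x * B \<le> x * (\<Prod>m\<in>{1..k}-{j}. \<bar>\<theta> j - \<theta>h (\<sigma> m)\<bar>)"
      unfolding B_def x_def by (rule mult_left_mono[OF low]) simp
    also have "\<dots> < \<epsilon>" using Pj unfolding x_def by (simp add: abs_minus_commute)
    finally have "x < \<epsilon> / B" using Bpos by (simp add: pos_less_divide_eq)
    also have "\<epsilon> / B = 2 ^ (k - 1) * \<epsilon> / (fact (k - 2) * \<Delta> ^ (k - 1))"
      unfolding B_def by (simp add: power_divide field_simps)
    finally show "\<bar>\<theta>h (\<sigma> j) - \<theta> j\<bar> \<le> 2 ^ (k - 1) * \<epsilon> / (fact (k - 2) * \<Delta> ^ (k - 1))"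
      unfolding x_def by simp
  qed
qed

end
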